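(* Let $r>1$ be an integer and $\mathcal{Z}\subseteq\{1,2,\dots,r-1\}$. Define integers $\xi_1,\dots,\xi_r$ by $\xi_1=1$ and, for $2\le\ell\le r$, $\xi_\ell=\xi_{\ell-1}-1$ if $\ell-1\in\mathcal{Z}$ and $\xi_\ell=2\xi_{\ell-1}$ otherwise. Then $\mathcal{Z}$ is admissible for $(1,1,r)$ if and only if $\xi_\ell>0$ for all $\ell=1,\dots,r$.
   Context: For integers $n,\ell>0$ and a finite-support integer sequence $\mu=(\mu_i)_{i\ge1}$, $\mathsf{K}_\ell(\mu,n)=n^\ell-\sum_{i=1}^{\ell}\mu_i n^{\ell-i}$ (with $0^0=1$). With $n_0=n_1=1$, for a pair $(\eta,\omega)$ of nonnegative integer sequences $(\eta_\ell)_{\ell\ge1},(\omega_\ell)_{\ell\ge1}$ with finite support, let $\mathsf{K}^\pm_\ell=\mathsf{K}_\ell(\eta\pm\omega,n_0\pm n_1)$, let $\mathsf{r}(\eta,\omega)$ be the largest index in the union of their supports, and $\mathsf{K}^\pm=\mathsf{K}^\pm_{\mathsf{r}(\eta,\omega)}$. A subset $\mathcal{Z}\subseteq\{1,\dots,r-1\}$ is admissible for $(n_0,n_1,r)$ if there exists such a pair $(\eta,\omega)$ with $\mathsf{r}(\eta,\omega)=r$ and $\mathsf{K}^+=\mathsf{K}^-=0$ such that, for $\ell\in\{1,\dots,r-1\}$, the inequality $\mathsf{K}^+_\ell\ge|\mathsf{K}^-_\ell|$ fails exactly when $\ell\in\mathcal{Z}$. *)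

theory Defs
  imports Main
begin

text \<open>Sequences \<open>(\<mu>_i)_{i \<ge> 1}\<close> are modelled as functions \<open>nat \<Rightarrow> int\<close>; the value at index 0 is ignored.\<close>

definition K :: "nat \<Rightarrow> (nat \<Rightarrow> int) \<Rightarrow> int \<Rightarrow> int" where
  "K l \<mu> n = n ^ l - (\<Sum>i = 1..l. \<mu> i * n ^ (l - i))"

definition supp2 :: "(nat \<Rightarrow> int) \<Rightarrow> (nat \<Rightarrow> int) \<Rightarrow> nat set" where
  "supp2 \<eta> \<omega> = {i. 1 \<le> i \<and> (\<eta> i \<noteq> 0 \<or> \<omega> i \<noteq> 0)}"

definition rr :: "(nat \<Rightarrow> int) \<Rightarrow> (nat \<Rightarrow> int) \<Rightarrow> nat" where
  "rr \<eta> \<omega> = Max (supp2 \<eta> \<omega>)"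

definition Kp :: "int \<Rightarrow> int \<Rightarrow> (nat \<Rightarrow> int) \<Rightarrow> (nat \<Rightarrow> int) \<Rightarrow> nat \<Rightarrow> int" where
  "Kp n0 n1 \<eta> \<omega> l = K l (\<lambda>i. \<eta> i + \<omega> i) (n0 + n1)"

definition Km :: "int \<Rightarrow> int \<Rightarrow> (nat \<Rightarrow> int) \<Rightarrow> (nat \<Rightarrow> int) \<Rightarrow> nat \<Rightarrow> int" where
  "Km n0 n1 \<eta> \<omega> l = K l (\<lambda>i. \<eta> i - \<omega> i) (n0 - n1)"

definition admissible :: "int \<Rightarrow> int \<Rightarrow> nat \<Rightarrow> nat set \<Rightarrow> bool" where
  "admissible n0 n1 r Z \<longleftrightarrow>
     (\<exists>\<eta> \<omega>. (\<forall>i. 0 \<le> \<eta> i) \<and> (\<forall>i. 0 \<le> \<omega> i) \<and>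
        finite (supp2 \<eta> \<omega>) \<and> supp2 \<eta> \<omega> \<noteq> {} \<and> rr \<eta> \<omega> = r \<and>
        Kp n0 n1 \<eta> \<omega> (rr \<eta> \<omega>) = 0 \<and> Km n0 n1 \<eta> \<omega> (rr \<eta> \<omega>) = 0 \<and>
        (\<forall>l\<in>{1..r-1}. (\<not> (Kp n0 n1 \<eta> \<omega> l \<ge> \<bar>Km n0 n1 \<eta> \<omega> l\<bar>)) \<longleftrightarrow> l \<in> Z))"

fun xi :: "nat set \<Rightarrow> nat \<Rightarrow> int" where
  "xi Z 0 = 1"
| "xi Z (Suc 0) = 1"
| "xi Z (Suc (Suc l)) = (if Suc l \<in> Z then xi Z (Suc l) - 1 else 2 * xi Z (Suc l))"

end

theory Submission
  imports Defs
begin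

lemma K_0: "K 0 \<mu> n = 1"
  by (simp add: K_def)

lemma K_Suc: "K (Suc l) \<mu> n = n * K l \<mu> n - \<mu> (Suc l)"
proof -
  have "(\<Sum>i = 1..Suc l. \<mu> i * n ^ (Suc l - i)) = (\<Sum>i = 1..l. \<mu> i * n ^ (Suc l - i)) + \<mu> (Suc l)"
    by simp
  also have "(\<Sum>i = 1..l. \<mu> i * n ^ (Suc l - i)) = n * (\<Sum>i = 1..l. \<mu> i * n ^ (l - i))"
    unfolding sum_distrib_left
    by (rule sum.cong) (auto simp: Suc_diff_le)
  finally show ?thesis by (simp add: K_def algebra_simps)
qed

lemma Kp0: "Kp 1 1 \<eta> \<omega> 0 = 1" by (simp add: Kp_def K_0)
lemma KpS: "Kp 1 1 \<eta> \<omega> (Suc l) = 2 * Kp 1 1 \<eta> \<omega> l - (\<eta> (Suc l) + \<omega> (Suc l))"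
  by (simp add: Kp_def K_Suc)
lemma KmS: "Km 1 1 \<eta> \<omega> (Suc l) = \<omega> (Suc l) - \<eta> (Suc l)"
  by (simp add: Km_def K_Suc)

lemma xi_SS: "xi Z (Suc (Suc l)) = (if Suc l \<in> Z then xi Z (Suc l) - 1 else 2 * xi Z (Suc l))"
  by simp

theorem lemma5:
  fixes r :: nat and Z :: "nat set"
  assumes "r > 1" and "Z \<subseteq> {1..r-1}"
  shows "admissible 1 1 r Z \<longleftrightarrow> (\<forall>l\<in>{1..r}. xi Z l > 0)"
proof
  assume "admissible 1 1 r Z"
  then obtain \<eta> \<omega> where nn1: "\<forall>i. 0 \<le> \<eta> i" and nn2: "\<forall>i. 0 \<le> \<omega> i"
    and fin: "finite (supp2 \<eta> \<omega>)" and ne: "supp2 \<eta> \<omega> \<noteq> {}" and rr: "rr \<eta> \<omega> = r"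
    and Kr: "Kp 1 1 \<eta> \<omega> r = 0"
    and Zc: "\<forall>l\<in>{1..r-1}. (\<not> (Kp 1 1 \<eta> \<omega> l \<ge> \<bar>Km 1 1 \<eta> \<omega> l\<bar>)) \<longleftrightarrow> l \<in> Z"
    unfolding admissible_def by auto
  define k where "k = Kp 1 1 \<eta> \<omega>"
  have k0: "k 0 = 1" by (simp add: k_def Kp0)
  have kS: "\<And>l. k (Suc l) = 2 * k l - (\<eta> (Suc l) + \<omega> (Suc l))" by (simp add: k_def KpS)
  have "r \<in> supp2 \<eta> \<omega>" using Max_in[OF fin ne] rr by (simp add: rr_def)
  then have ar: "\<eta> r + \<omega> r > 0" using nn1 nn2 unfolding supp2_def
    by (smt (verit) mem_Collect_eq)
  obtain m where rm: "r = Suc m" using assms(1) by (cases r) auto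
  have km: "k m > 0" using Kr kS[of m] ar rm by (simp add: k_def)
  have up: "l < r \<Longrightarrow> k l \<le> xi Z (Suc l)" for l
  proof (induction l)
    case 0 then show ?case by (simp add: k0)
  next
    case (Suc l)
    have IH: "k l \<le> xi Z (Suc l)" using Suc by simp
    have mem: "Suc l \<in> {1..r-1}" using Suc.prems by auto
    have ab: "\<bar>Km 1 1 \<eta> \<omega> (Suc l)\<bar> \<le> \<eta> (Suc l) + \<omega> (Suc l)"
      using nn1 nn2 by (simp add: KmS abs_le_iff)
    show ?case
    proof (cases "Suc l \<in> Z")
      case True
      then have "k (Suc l) < \<bar>Km 1 1 \<eta> \<omega> (Suc l)\<bar>" using Zc mem unfolding k_def by (meson not_le)
      then show ?thesis using ab kS[of l] IH True by simp
    next
      case False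
      then show ?thesis using kS[of l] IH nn1 nn2 by (simp) (smt (verit))
    qed
  qed
  have low: "l < r \<Longrightarrow> k l > 0" for l
  proof (rule ccontr)
    assume lr: "l < r" and "\<not> k l > 0"
    then have kl: "k l \<le> 0" by simp
    have "j \<le> m - l \<Longrightarrow> k (l + j) \<le> 0" for j
    proof (induction j)
      case 0 then show ?case using kl by simp
    next
      case (Suc j)
      then show ?case using kS[of "l + j"] nn1 nn2 by simp (smt (verit))
    qed
    from this[of "m - l"] have "k m \<le> 0" using lr rm by simp
    then show False using km by simp
  qed
  show "\<forall>l\<in>{1..r}. xi Z l > 0"
  proof
    fix l assume "l \<in> {1..r}"
    then obtain j where "l = Suc j" "j < r" by (cases l) auto
    then show "xi Z l > 0" using up[of j] low[of j] by simp
  qed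
next
  assume pos: "\<forall>l\<in>{1..r}. xi Z l > 0"
  have rZ: "r \<notin> Z" "0 \<notin> Z" using assms by auto
  define \<eta> where "\<eta> = (\<lambda>l. if l \<in> Z then xi Z l + 1 else if l = r then xi Z r else 0)"
  define \<omega> where "\<omega> = (\<lambda>l. if l = r then xi Z r else 0)"
  have xr: "xi Z r > 0" using pos assms by auto
  have nn1: "\<forall>i. 0 \<le> \<eta> i" using pos assms(2) xr unfolding \<eta>_def by (auto simp: subset_iff) (smt (verit) atLeastAtMost_iff diff_le_self le_trans)
  have nn2: "\<forall>i. 0 \<le> \<omega> i" using xr unfolding \<omega>_def by auto
  have sub: "supp2 \<eta> \<omega> \<subseteq> {1..r}" using assms(2) unfolding supp2_def \<eta>_def \<omega>_def by auto
  have rin: "r \<in> supp2 \<eta> \<omega>" using xr assms(1) unfolding supp2_def \<omega>_def by auto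
  have fin: "finite (supp2 \<eta> \<omega>)" using sub finite_subset by blast
  have rr: "rr \<eta> \<omega> = r" unfolding rr_def
    by (rule Max_eqI[OF fin]) (use sub rin in auto)
  define k where "k = Kp 1 1 \<eta> \<omega>"
  have k0: "k 0 = 1" by (simp add: k_def Kp0)
  have kS: "\<And>l. k (Suc l) = 2 * k l - (\<eta> (Suc l) + \<omega> (Suc l))" by (simp add: k_def KpS)
  have keq: "l < r \<Longrightarrow> k l = xi Z (Suc l)" for l
  proof (induction l)
    case 0 then show ?case by (simp add: k0)
  next
    case (Suc l)
    then have "Suc l \<noteq> r" by simp
    then show ?case using Suc kS[of l] by (simp add: \<eta>_def \<omega>_def)
  qed
  obtain m where rm: "r = Suc m" using assms(1) by (cases r) auto
  have Kr: "k r = 0" using kS[of m] keq[of m] rm rZ by (simp add: \<eta>_def \<omega>_def)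
  have Kmr: "Km 1 1 \<eta> \<omega> r = 0" using rm KmS[of \<eta> \<omega> m] rZ by (simp add: \<eta>_def \<omega>_def)
  have cond: "\<forall>l\<in>{1..r-1}. (\<not> (Kp 1 1 \<eta> \<omega> l \<ge> \<bar>Km 1 1 \<eta> \<omega> l\<bar>)) \<longleftrightarrow> l \<in> Z"
  proof
    fix l assume l: "l \<in> {1..r-1}"
    then obtain j where j: "l = Suc j" by (cases l) auto
    have lr: "l \<noteq> r" "l < r" using l assms(1) by auto
    have kl: "Kp 1 1 \<eta> \<omega> l = xi Z (Suc l)" using keq[of l] lr by (simp add: k_def)
    have Kml: "Km 1 1 \<eta> \<omega> l = - \<eta> l" using KmS[of \<eta> \<omega> j] j lr by (simp add: \<omega>_def)
    have pl: "xi Z l > 0" "xi Z (Suc l) > 0" using pos l lr by auto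
    show "(\<not> (Kp 1 1 \<eta> \<omega> l \<ge> \<bar>Km 1 1 \<eta> \<omega> l\<bar>)) \<longleftrightarrow> l \<in> Z"
      using kl Kml pl j lr by (auto simp: \<eta>_def)
  qed
  show "admissible 1 1 r Z"
    unfolding admissible_def
    apply (rule exI[of _ \<eta>], rule exI[of _ \<omega>])
    using nn1 nn2 fin rin rr Kr Kmr cond by (auto simp: k_def)
qed

end
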